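(* Let $G=(V,E)$ be a finite simple graph. Consider the procedure: set $\mathcal{F}\leftarrow\emptyset$; while $\mathrm{MFF}(G,\mathcal{F})$ is feasible, choose an optimal solution $x$ of $\mathrm{MFF}(G,\mathcal{F})$ and replace $\mathcal{F}$ by $\mathcal{F}\cup\{\{v\in V\colon x_v=1\}\}$; finally return $\mathcal{F}$. Then the returned collection $\mathcal{F}$ is the collection of all minimal forts of $G$.
   Context: $N(u)$ denotes the neighborhood of $u$. A fort of $G$ is a non-empty set $F\subseteq V$ such that no vertex $u\in V\setminus F$ has exactly one neighbor in $F$; it is minimal if no fort of $G$ is a proper subset of it. For a collection $\mathcal{F}$ of subsets of $V$, $\mathrm{MFF}(G,\mathcal{F})$ is the integer program: minimize $\sum_{v\in V}x_v$ subject to $\sum_{v\in V}x_v\geq1$; $x_u-x_v+\sum_{w\in N(u)\setminus\{v\}}x_w\geq0$ for all $v\in V$ and $u\in N(v)$; $\sum_{v\in F}x_v\leq|F|-1$ for all $F\in\mathcal{F}$; $x\in\{0,1\}^V$. *)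

theory Defs
  imports Main
begin

definition simple_graph :: "'a set \<Rightarrow> ('a \<Rightarrow> 'a \<Rightarrow> bool) \<Rightarrow> bool" where
  "simple_graph V E \<longleftrightarrow> finite V \<and> (\<forall>u v. E u v \<longrightarrow> u \<in> V \<and> v \<in> V)
     \<and> (\<forall>u v. E u v \<longrightarrow> E v u) \<and> (\<forall>u. \<not> E u u)"

definition nbhd :: "'a set \<Rightarrow> ('a \<Rightarrow> 'a \<Rightarrow> bool) \<Rightarrow> 'a \<Rightarrow> 'a set" where
  "nbhd V E u = {w \<in> V. E u w}"

definition is_fort :: "'a set \<Rightarrow> ('a \<Rightarrow> 'a \<Rightarrow> bool) \<Rightarrow> 'a set \<Rightarrow> bool" where
  "is_fort V E F \<longleftrightarrow> F \<noteq> {} \<and> F \<subseteq> V \<and>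
     (\<forall>u \<in> V - F. card (nbhd V E u \<inter> F) \<noteq> 1)"

definition is_minimal_fort :: "'a set \<Rightarrow> ('a \<Rightarrow> 'a \<Rightarrow> bool) \<Rightarrow> 'a set \<Rightarrow> bool" where
  "is_minimal_fort V E F \<longleftrightarrow> is_fort V E F \<and> (\<forall>F'. F' \<subset> F \<longrightarrow> \<not> is_fort V E F')"

text \<open>Feasible points of MFF(G, FF): 0/1 vectors indexed by V (values outside V are irrelevant).\<close>
definition mff_feasible :: "'a set \<Rightarrow> ('a \<Rightarrow> 'a \<Rightarrow> bool) \<Rightarrow> 'a set set \<Rightarrow> ('a \<Rightarrow> int) \<Rightarrow> bool" where
  "mff_feasible V E FF x \<longleftrightarrow>
     (\<forall>v \<in> V. x v \<in> {0, 1}) \<and>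
     (\<Sum>v\<in>V. x v) \<ge> 1 \<and>
     (\<forall>v \<in> V. \<forall>u \<in> nbhd V E v. x u - x v + (\<Sum>w \<in> nbhd V E u - {v}. x w) \<ge> 0) \<and>
     (\<forall>F \<in> FF. (\<Sum>v\<in>F. x v) \<le> int (card F) - 1)"

definition mff_is_feasible :: "'a set \<Rightarrow> ('a \<Rightarrow> 'a \<Rightarrow> bool) \<Rightarrow> 'a set set \<Rightarrow> bool" where
  "mff_is_feasible V E FF \<longleftrightarrow> (\<exists>x. mff_feasible V E FF x)"

definition mff_optimal :: "'a set \<Rightarrow> ('a \<Rightarrow> 'a \<Rightarrow> bool) \<Rightarrow> 'a set set \<Rightarrow> ('a \<Rightarrow> int) \<Rightarrow> bool" where
  "mff_optimal V E FF x \<longleftrightarrow> mff_feasible V E FF x \<and>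
     (\<forall>y. mff_feasible V E FF y \<longrightarrow> (\<Sum>v\<in>V. x v) \<le> (\<Sum>v\<in>V. y v))"

definition mff_step :: "'a set \<Rightarrow> ('a \<Rightarrow> 'a \<Rightarrow> bool) \<Rightarrow> 'a set set \<Rightarrow> 'a set set \<Rightarrow> bool" where
  "mff_step V E FF FF' \<longleftrightarrow> mff_is_feasible V E FF \<and>
     (\<exists>x. mff_optimal V E FF x \<and> FF' = insert {v \<in> V. x v = 1} FF)"

end

theory Submission
  imports Defs
begin

definition ind :: "'a set \<Rightarrow> 'a \<Rightarrow> int" where
  "ind S = (\<lambda>v. if v \<in> S then 1 else 0)"

lemma sum_ind: "finite A \<Longrightarrow> (\<Sum>v\<in>A. ind S v) = int (card (A \<inter> S))"
  unfolding ind_def by (simp add: sum.If_cases)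

lemma feas_fort:
  assumes g: "simple_graph V E" and x: "mff_feasible V E FF x"
  shows "is_fort V E {v\<in>V. x v = 1} \<and> (\<forall>F\<in>FF. \<not> F \<subseteq> {v\<in>V. x v = 1})
         \<and> (\<Sum>v\<in>V. x v) = int (card {v\<in>V. x v = 1})"
proof -
  let ?S = "{v\<in>V. x v = 1}"
  have fin: "finite V" using g by (simp add: simple_graph_def)
  have x01: "\<forall>v\<in>V. x v \<in> {0,1}" using x by (simp add: mff_feasible_def)
  have xe: "\<forall>v\<in>V. x v = ind ?S v" using x01 by (auto simp: ind_def)
  have sumeq: "(\<Sum>v\<in>V. x v) = int (card ?S)"
    using sum.cong[OF refl, of V x "ind ?S"] xe sum_ind[OF fin, of ?S]
    by (simp add: Int_absorb1 Collect_conj_eq Int_commute)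
  have ne: "?S \<noteq> {}"
  proof
    assume "?S = {}"
    then have "\<forall>v\<in>V. x v = 0" using x01 by auto
    then have "(\<Sum>v\<in>V. x v) = 0" by simp
    then show False using x by (simp add: mff_feasible_def)
  qed
  have cond: "\<forall>u \<in> V - ?S. card (nbhd V E u \<inter> ?S) \<noteq> 1"
  proof (intro ballI notI)
    fix u assume u: "u \<in> V - ?S" and c: "card (nbhd V E u \<inter> ?S) = 1"
    then obtain v where vv: "nbhd V E u \<inter> ?S = {v}" by (auto simp: card_Suc_eq)
    then have v: "v \<in> V" "x v = 1" "E u v" by (auto simp: nbhd_def)
    then have un: "u \<in> nbhd V E v" using u g by (auto simp: nbhd_def simple_graph_def)
    have "x u - x v + (\<Sum>w \<in> nbhd V E u - {v}. x w) \<ge> 0"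
      using x v(1) un by (simp add: mff_feasible_def)
    moreover have "(\<Sum>w \<in> nbhd V E u - {v}. x w) = 0"
    proof (rule sum.neutral, rule ballI)
      fix w assume w: "w \<in> nbhd V E u - {v}"
      then have "w \<in> V" "w \<notin> ?S" using vv by (auto simp: nbhd_def)
      then show "x w = 0" using x01 by auto
    qed
    moreover have "x u = 0" using u x01 by auto
    ultimately show False using v by simp
  qed
  have ff: "\<forall>F\<in>FF. \<not> F \<subseteq> ?S"
  proof (intro ballI notI)
    fix F assume F: "F \<in> FF" "F \<subseteq> ?S"
    then have "(\<Sum>v\<in>F. x v) = (\<Sum>v\<in>F. 1)" by (intro sum.cong) auto
    then have "(\<Sum>v\<in>F. x v) = int (card F)" by simp
    moreover have "(\<Sum>v\<in>F. x v) \<le> int (card F) - 1" using x F by (simp add: mff_feasible_def)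
    ultimately show False by simp
  qed
  show ?thesis using ne cond ff sumeq by (simp add: is_fort_def)
qed

lemma fort_feas:
  assumes g: "simple_graph V E" and S: "is_fort V E S"
    and ff: "\<forall>F\<in>FF. finite F \<and> \<not> F \<subseteq> S"
  shows "mff_feasible V E FF (ind S) \<and> (\<Sum>v\<in>V. ind S v) = int (card S)"
proof -
  have fin: "finite V" using g by (simp add: simple_graph_def)
  have SV: "S \<subseteq> V" "S \<noteq> {}" using S by (auto simp: is_fort_def)
  have finS: "finite S" using SV fin finite_subset by blast
  have sumV: "(\<Sum>v\<in>V. ind S v) = int (card S)"
    using sum_ind[OF fin, of S] SV by (simp add: Int_absorb1)
  have c1: "card S \<ge> 1" using finS SV by (simp add: Suc_le_eq card_gt_0_iff)
  have nn: "\<And>A. (\<Sum>w\<in>A. ind S w) \<ge> 0" by (rule sum_nonneg) (simp add: ind_def)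
  have c2: "\<forall>v \<in> V. \<forall>u \<in> nbhd V E v. ind S u - ind S v + (\<Sum>w \<in> nbhd V E u - {v}. ind S w) \<ge> 0"
  proof (intro ballI)
    fix v u assume v: "v \<in> V" and u: "u \<in> nbhd V E v"
    show "ind S u - ind S v + (\<Sum>w \<in> nbhd V E u - {v}. ind S w) \<ge> 0"
    proof (cases "u \<notin> S \<and> v \<in> S")
      case False
      then show ?thesis using nn[of "nbhd V E u - {v}"] by (auto simp: ind_def)
    next
      case True
      have uV: "u \<in> V" "E u v" using u g by (auto simp: nbhd_def simple_graph_def)
      have vin: "v \<in> nbhd V E u \<inter> S" using uV v True by (simp add: nbhd_def)
      have finN: "finite (nbhd V E u)" using fin by (simp add: nbhd_def)
      have "card (nbhd V E u \<inter> S) \<noteq> 1" using S uV True by (simp add: is_fort_def)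
      then obtain w where w: "w \<in> nbhd V E u \<inter> S" "w \<noteq> v"
        using vin by (cases "nbhd V E u \<inter> S = {v}") auto
      have "ind S w \<le> (\<Sum>w \<in> nbhd V E u - {v}. ind S w)"
        by (rule member_le_sum) (use w finN in \<open>auto simp: ind_def\<close>)
      then show ?thesis using True w by (simp add: ind_def)
    qed
  qed
  have c3: "\<forall>F \<in> FF. (\<Sum>v\<in>F. ind S v) \<le> int (card F) - 1"
  proof
    fix F assume F: "F \<in> FF"
    then have fF: "finite F" and nF: "\<not> F \<subseteq> S" using ff by auto
    have "F \<inter> S \<subset> F" using nF by auto
    then have "card (F \<inter> S) < card F" using fF by (simp add: psubset_card_mono)
    then show "(\<Sum>v\<in>F. ind S v) \<le> int (card F) - 1" using sum_ind[OF fF, of S] by simp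
  qed
  have c0: "\<forall>v \<in> V. ind S v \<in> {0,1}" by (simp add: ind_def)
  show ?thesis using c0 c1 c2 c3 sumV by (simp add: mff_feasible_def)
qed

definition inv :: "'a set \<Rightarrow> ('a \<Rightarrow> 'a \<Rightarrow> bool) \<Rightarrow> 'a set set \<Rightarrow> bool" where
  "inv V E FF \<longleftrightarrow> FF \<subseteq> {F. is_minimal_fort V E F}"

lemma minfort_fin: "simple_graph V E \<Longrightarrow> is_minimal_fort V E F \<Longrightarrow> finite F"
  by (meson finite_subset is_fort_def is_minimal_fort_def simple_graph_def)

lemma step_inv:
  assumes g: "simple_graph V E" and I: "inv V E FF" and st: "mff_step V E FF FF'"
  shows "inv V E FF' \<and> FF \<subset> FF'"
proof -
  obtain x where x: "mff_optimal V E FF x" and FF': "FF' = insert {v \<in> V. x v = 1} FF"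
    using st by (auto simp: mff_step_def)
  let ?S = "{v \<in> V. x v = 1}"
  have xf: "mff_feasible V E FF x" using x by (simp add: mff_optimal_def)
  note A = feas_fort[OF g xf]
  have notin: "?S \<notin> FF" using A by (meson order_refl)
  have minim: "is_minimal_fort V E ?S"
    unfolding is_minimal_fort_def
  proof (intro conjI allI impI notI)
    show "is_fort V E ?S" using A by simp
  next
    fix F' assume sub: "F' \<subset> ?S" and F'f: "is_fort V E F'"
    have "\<forall>F\<in>FF. finite F \<and> \<not> F \<subseteq> F'"
    proof
      fix F assume F: "F \<in> FF"
      then have "is_minimal_fort V E F" using I by (auto simp: inv_def)
      then have "finite F" by (rule minfort_fin[OF g])
      moreover have "\<not> F \<subseteq> ?S" using A F by blast
      ultimately show "finite F \<and> \<not> F \<subseteq> F'" using sub by blast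
    qed
    note B = fort_feas[OF g F'f this]
    have "(\<Sum>v\<in>V. x v) \<le> (\<Sum>v\<in>V. ind F' v)" using x B unfolding mff_optimal_def by blast
    moreover have "card F' < card ?S"
      using sub g by (intro psubset_card_mono) (auto simp: simple_graph_def)
    ultimately show False using A B by simp
  qed
  show ?thesis using I minim notin FF' by (auto simp: inv_def)
qed

theorem corollary6p3:
  fixes V :: "'a set" and E :: "'a \<Rightarrow> 'a \<Rightarrow> bool"
  assumes "simple_graph V E"
  shows "\<not> (\<exists>f :: nat \<Rightarrow> 'a set set. f 0 = {} \<and> (\<forall>n. mff_step V E (f n) (f (Suc n))))
         \<and> (\<forall>FF. (mff_step V E)\<^sup>*\<^sup>* {} FF \<and> \<not> mff_is_feasible V E FF \<longrightarrow>
              FF = {F. is_minimal_fort V E F})"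
proof
  have g: "simple_graph V E" by fact
  let ?M = "{F. is_minimal_fort V E F}"
  have finM: "finite ?M"
  proof (rule finite_subset)
    show "?M \<subseteq> Pow V" by (auto simp: is_minimal_fort_def is_fort_def)
    show "finite (Pow V)" using g by (simp add: simple_graph_def)
  qed
  show "\<not> (\<exists>f :: nat \<Rightarrow> 'a set set. f 0 = {} \<and> (\<forall>n. mff_step V E (f n) (f (Suc n))))"
  proof
    assume "\<exists>f :: nat \<Rightarrow> 'a set set. f 0 = {} \<and> (\<forall>n. mff_step V E (f n) (f (Suc n)))"
    then obtain f :: "nat \<Rightarrow> 'a set set" where f0: "f 0 = {}" and fs: "\<forall>n. mff_step V E (f n) (f (Suc n))"
      by blast
    have *: "inv V E (f n) \<and> n \<le> card (f n)" for n
    proof (induction n)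
      case 0 then show ?case by (simp add: f0 inv_def)
    next
      case (Suc n)
      note S = step_inv[OF g conjunct1[OF Suc] fs[rule_format, of n]]
      have "finite (f (Suc n))" using S finM by (meson finite_subset inv_def)
      then have "card (f n) < card (f (Suc n))" using S psubset_card_mono by blast
      then show ?case using S Suc by simp
    qed
    have "card (f (Suc (card ?M))) \<le> card ?M"
      using * finM by (meson card_mono inv_def)
    then show False using *[of "Suc (card ?M)"] by simp
  qed
next
  have g: "simple_graph V E" by fact
  show "\<forall>FF. (mff_step V E)\<^sup>*\<^sup>* {} FF \<and> \<not> mff_is_feasible V E FF \<longrightarrow>
              FF = {F. is_minimal_fort V E F}"
  proof (intro allI impI)
    fix FF assume h: "(mff_step V E)\<^sup>*\<^sup>* {} FF \<and> \<not> mff_is_feasible V E FF"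
    have I: "inv V E FF" using conjunct1[OF h]
    proof (induction rule: rtranclp_induct)
      case base then show ?case by (simp add: inv_def)
    next
      case (step y z) then show ?case using step_inv[OF g] by blast
    qed
    show "FF = {F. is_minimal_fort V E F}"
    proof
      show "FF \<subseteq> {F. is_minimal_fort V E F}" using I by (simp add: inv_def)
    next
      show "{F. is_minimal_fort V E F} \<subseteq> FF"
      proof
        fix M assume "M \<in> {F. is_minimal_fort V E F}"
        then have M: "is_minimal_fort V E M" by simp
        show "M \<in> FF"
        proof (rule ccontr)
          assume nM: "M \<notin> FF"
          have "\<forall>F\<in>FF. finite F \<and> \<not> F \<subseteq> M"
          proof
            fix F assume F: "F \<in> FF"
            then have Fm: "is_minimal_fort V E F" using I by (auto simp: inv_def)
            have "\<not> F \<subseteq> M"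
            proof
              assume "F \<subseteq> M"
              then have "F \<subset> M" using F nM by auto
              then show False using M Fm by (simp add: is_minimal_fort_def)
            qed
            then show "finite F \<and> \<not> F \<subseteq> M" using minfort_fin[OF g Fm] by simp
          qed
          then have "mff_feasible V E FF (ind M)"
            using fort_feas[OF g] M by (simp add: is_minimal_fort_def)
          then show False using h by (auto simp: mff_is_feasible_def)
        qed
      qed
    qed
  qed
qed

end
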